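(* Let $1\le k<n$ and let $X$ be a fixed real $n\times k$ matrix of full column rank $k$. Let $\mathbf{F}_2^0$ be the class of all distributions $F$ of $Y=X\beta+e$ in $\mathbb{R}^n$, where $\beta$ ranges over $\mathbb{R}^k$ and the distribution of $e$ ranges over all distributions on $\mathbb{R}^n$ with $Ee=0$ and $Eee'=\sigma^2 I_n$ for some $0<\sigma^2<\infty$; write $\beta(F)$ for the corresponding $\beta$ and $e=Y-X\beta(F)$ for the error vector under $F$. Let $\hat\beta_{OLS}=(X'X)^{-1}X'Y$, let $H_1,\dots,H_k$ be symmetric real $n\times n$ matrices with $\operatorname{tr}(H_i)=0$ and $X'H_iX=0$ for $i=1,\dots,k$, and for $\alpha\in\mathbb{R}$ define $$\hat\beta_\alpha=\hat\beta_{OLS}+\alpha\,(Y'H_1Y,\dots,Y'H_kY)'.$$ Write $Q=(Y'H_1Y,\dots,Y'H_kY)'$. Then: (a) $E_F(\hat\beta_\alpha)=\beta(F)$ for all $F\in\mathbf{F}_2^0$ and all $\alpha\in\mathbb{R}$. (b) If $\operatorname{Cov}_F(c'\hat\beta_{OLS},c'Q)\neq 0$ for some $c\in\mathbb{R}^k$ and some $F\in\mathbf{F}_2^0$ under which $Y$ has finite fourth moments, then there exists $\alpha\in\mathbb{R}$ such that $\operatorname{Var}_F(c'\hat\beta_\alpha)<\operatorname{Var}_F(c'\hat\beta_{OLS})$. (c) For every $c\in\mathbb{R}^k$ and every $F\in\mathbf{F}_2^0$ with finite fourth moments and $\beta(F)=0$, $$\operatorname{Cov}_F(c'\hat\beta_{OLS},c'Q)=\sum_{j=1}^n\sum_{l=1}^n\sum_{m=1}^n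 d_j\Big(\sum_{i=1}^k c_i h_{lm}(i)\Big)E_F(e_je_le_m),$$ where $d=(d_1,\dots,d_n)'=X(X'X)^{-1}c$ and $h_{lm}(i)$ is the $(l,m)$-th entry of $H_i$. (d) For every $c\in\mathbb{R}^k$ and every $F\in\mathbf{F}_2^0$ with finite fourth moments under which $\beta(F)=0$ and the coordinates $e_1,\dots,e_n$ of $e$ are independent, $$\operatorname{Cov}_F(c'\hat\beta_{OLS},c'Q)=\sum_{j=1}^n d_j\Big(\sum_{i=1}^k c_i h_{jj}(i)\Big)E_F(e_j^3),$$ with $d$ and $h_{jj}(i)$ as in (c).
   Context: $E_F$, $\operatorname{Var}_F$, $\operatorname{Cov}_F$ denote expectation, variance and covariance when $Y$ has distribution $F$. *)

theory Defs
  imports "HOL-Probability.Probability"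
begin

text \<open>Design matrix X :: real^'k^'n (n rows, k columns). A distribution F of Y is a
probability measure M on the Borel sets of real^'n.\<close>

definition expect :: "('a measure) \<Rightarrow> ('a \<Rightarrow> real) \<Rightarrow> real" where
  "expect M f = (\<integral>y. f y \<partial>M)"

definition cov :: "('a measure) \<Rightarrow> ('a \<Rightarrow> real) \<Rightarrow> ('a \<Rightarrow> real) \<Rightarrow> real" where
  "cov M f g = expect M (\<lambda>y. (f y - expect M f) * (g y - expect M g))"

definition var :: "('a measure) \<Rightarrow> ('a \<Rightarrow> real) \<Rightarrow> real" where
  "var M f = expect M (\<lambda>y. (f y - expect M f)^2)"

definition in_F20 :: "real^'k^'n \<Rightarrow> (real^'n) measure \<Rightarrow> real^'k \<Rightarrow> bool" where
  "in_F20 X M b \<longleftrightarrow> prob_space M \<and> sets M = sets borel \<and>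
     (\<exists>\<sigma>2::real. 0 < \<sigma>2 \<and>
        (\<forall>i. integrable M (\<lambda>y. (y - X *v b) $ i) \<and> expect M (\<lambda>y. (y - X *v b) $ i) = 0) \<and>
        (\<forall>i j. integrable M (\<lambda>y. (y - X *v b) $ i * (y - X *v b) $ j) \<and>
               expect M (\<lambda>y. (y - X *v b) $ i * (y - X *v b) $ j) = (if i = j then \<sigma>2 else 0)))"

definition fourth_moments :: "(real^'n) measure \<Rightarrow> bool" where
  "fourth_moments M \<longleftrightarrow> (\<forall>i. integrable M (\<lambda>y. (y $ i) ^ 4))"

definition ols :: "real^'k^'n \<Rightarrow> real^'n \<Rightarrow> real^'k" where
  "ols X y = matrix_inv (transpose X ** X) *v (transpose X *v y)"

definition quadvec :: "('k \<Rightarrow> real^'n^'n) \<Rightarrow> real^'n \<Rightarrow> real^'k" where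
  "quadvec H y = (\<chi> i. y \<bullet> (H i *v y))"

definition est_alpha :: "real^'k^'n \<Rightarrow> ('k \<Rightarrow> real^'n^'n) \<Rightarrow> real \<Rightarrow> real^'n \<Rightarrow> real^'k" where
  "est_alpha X H \<alpha> y = ols X y + \<alpha> *\<^sub>R quadvec H y"

end

theory Submission
  imports Defs
begin


lemma bound4:
  fixes a b c d :: real
  shows "\<bar>a*b*c*d\<bar> \<le> a^4+b^4+c^4+d^4"
proof -
  have 1: "2*\<bar>a*b\<bar> \<le> a^2+b^2"
    using sum_squares_bound[of "\<bar>a\<bar>" "\<bar>b\<bar>"] by (simp add: abs_mult power2_abs)
  have 2: "2*\<bar>c*d\<bar> \<le> c^2+d^2"
    using sum_squares_bound[of "\<bar>c\<bar>" "\<bar>d\<bar>"] by (simp add: abs_mult power2_abs)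
  have "4*\<bar>a*b*c*d\<bar> = (2*\<bar>a*b\<bar>)*(2*\<bar>c*d\<bar>)" by (simp add: abs_mult)
  also have "\<dots> \<le> (a^2+b^2)*(c^2+d^2)"
    using 1 2 by (intro mult_mono) auto
  also have "\<dots> \<le> ((a^2+b^2)^2+(c^2+d^2)^2)/2"
    using sum_squares_bound[of "a^2+b^2" "c^2+d^2"] by (simp add: algebra_simps)
  also have "\<dots> \<le> 2*(a^4+b^4+c^4+d^4)"
  proof -
    have h: "0 \<le> a^4" "0 \<le> b^4" "0 \<le> c^4" "0 \<le> d^4"
      by (simp_all add: zero_le_even_power)
    show ?thesis
    using sum_squares_bound[of "a^2" "b^2"] sum_squares_bound[of "c^2" "d^2"]
    by (simp add: power2_sum power_mult[symmetric] algebra_simps) (insert h, linarith)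
  qed
  finally show ?thesis by simp
qed

lemma meas_M:
  assumes "sets M = sets borel" "f \<in> borel_measurable borel"
  shows "f \<in> borel_measurable M"
  using assms measurable_cong_sets by blast

lemma mono4:
  fixes M :: "(real^'n) measure"
  assumes ps: "prob_space M" and s: "sets M = sets borel" and fm: "fourth_moments M"
  shows "integrable M (\<lambda>y. y$a * y$b * y$c * y$d)"
proof (rule Bochner_Integration.integrable_bound)
  show "integrable M (\<lambda>y. (y$a)^4 + (y$b)^4 + (y$c)^4 + (y$d)^4)"
    using fm unfolding fourth_moments_def by auto
  show "(\<lambda>y. y$a * y$b * y$c * y$d) \<in> borel_measurable M"
    by (rule meas_M[OF s]) measurable
  show "AE x in M. norm (x$a * x$b * x$c * x$d) \<le> norm ((x$a)^4 + (x$b)^4 + (x$c)^4 + (x$d)^4)"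
    using bound4 by (auto intro!: AE_I2 simp: abs_of_nonneg order_trans[OF bound4])
qed

lemma inner_matrix_transpose:
  fixes A :: "real^'n^'m"
  shows "x \<bullet> (A *v y) = (transpose A *v x) \<bullet> y"
  by (metis dot_lmul_matrix transpose_matrix_vector)

lemma XtX_inv:
  fixes X :: "real^'k^'n"
  assumes "rank X = CARD('k)"
  defines "S \<equiv> transpose X ** X"
  shows "matrix_inv S ** S = mat 1" "S ** matrix_inv S = mat 1"
    "transpose (matrix_inv S) = matrix_inv S"
proof -
  have inj: "inj ((*v) X)" using full_rank_injective assms(1) by blast
  have "\<forall>x. S *v x = 0 \<longrightarrow> x = 0"
  proof (intro allI impI)
    fix x assume "S *v x = 0"
    then have "x \<bullet> (S *v x) = 0" by simp
    moreover have "x \<bullet> (S *v x) = (X *v x) \<bullet> (X *v x)"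
      unfolding S_def matrix_vector_mul_assoc[symmetric] inner_matrix_transpose by simp
    ultimately have "X *v x = X *v 0" by simp
    with inj show "x = 0" by (meson injD)
  qed
  then obtain B where "B ** S = mat 1" using matrix_left_invertible_ker by blast
  then have "S ** B = mat 1 \<and> B ** S = mat 1" using matrix_left_right_inverse by blast
  then have inv: "S ** matrix_inv S = mat 1 \<and> matrix_inv S ** S = mat 1"
    unfolding matrix_inv_def by (rule someI)
  then show 1: "matrix_inv S ** S = mat 1" "S ** matrix_inv S = mat 1" by auto
  have St: "transpose S = S" unfolding S_def by (simp add: matrix_transpose_mul)
  have "transpose (matrix_inv S) ** S = mat 1"
    by (metis 1(2) St matrix_transpose_mul transpose_mat)
  then have "transpose (matrix_inv S) = transpose (matrix_inv S) ** (S ** matrix_inv S)"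
    by (simp add: 1)
  also have "\<dots> = matrix_inv S"
    by (simp add: matrix_mul_assoc \<open>transpose (matrix_inv S) ** S = mat 1\<close>)
  finally show "transpose (matrix_inv S) = matrix_inv S" .
qed

lemma int_centered:
  fixes f g :: "'a \<Rightarrow> real"
  assumes ps: "prob_space M" and "integrable M f" "integrable M g" "integrable M (\<lambda>y. f y * g y)"
  shows "integrable M (\<lambda>y. (f y - a) * (g y - b))"
proof -
  interpret prob_space M by fact
  have e: "(\<lambda>y. (f y - a) * (g y - b)) = (\<lambda>y. f y * g y - b * f y - a * g y + a * b)"
    by (auto simp: algebra_simps)
  show ?thesis unfolding e using assms by auto
qed

lemma var_lin:
  fixes f g :: "'a \<Rightarrow> real"
  assumes ps: "prob_space M" and i: "integrable M f" "integrable M g"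
    "integrable M (\<lambda>y. f y * g y)" "integrable M (\<lambda>y. f y * f y)" "integrable M (\<lambda>y. g y * g y)"
  shows "var M (\<lambda>y. f y + \<alpha> * g y) = var M f + 2*\<alpha>*cov M f g + \<alpha>^2 * var M g"
proof -
  interpret prob_space M by fact
  define Ef where "Ef = integral\<^sup>L M f"
  define Eg where "Eg = integral\<^sup>L M g"
  have E: "expect M (\<lambda>y. f y + \<alpha> * g y) = Ef + \<alpha> * Eg"
    unfolding expect_def Ef_def Eg_def using i by simp
  have i1: "integrable M (\<lambda>y. (f y - Ef) * (f y - Ef))"
    by (rule int_centered[OF ps i(1) i(1) i(4)])
  have i2: "integrable M (\<lambda>y. (f y - Ef) * (g y - Eg))"
    by (rule int_centered[OF ps i(1) i(2) i(3)])
  have i3: "integrable M (\<lambda>y. (g y - Eg) * (g y - Eg))"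
    by (rule int_centered[OF ps i(2) i(2) i(5)])
  have eq: "(\<lambda>y. (f y + \<alpha> * g y - (Ef + \<alpha> * Eg))^2) =
     (\<lambda>y. (f y - Ef) * (f y - Ef) + (2*\<alpha>) * ((f y - Ef) * (g y - Eg)) + \<alpha>^2 * ((g y - Eg) * (g y - Eg)))"
    by (auto simp: power2_eq_square algebra_simps)
  show ?thesis
    unfolding var_def cov_def E eq
    unfolding expect_def Ef_def[symmetric] Eg_def[symmetric]
    using i1 i2 i3 by (simp add: power2_eq_square)
qed

lemma mono3:
  fixes M :: "(real^'n) measure"
  assumes ps: "prob_space M" and s: "sets M = sets borel" and fm: "fourth_moments M"
  shows "integrable M (\<lambda>y. y$a * y$b * y$c)"
proof (rule Bochner_Integration.integrable_bound)
  interpret prob_space M by fact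
  show "integrable M (\<lambda>y. (y$a)^4 + (y$b)^4 + (y$c)^4 + 1)"
    using fm unfolding fourth_moments_def by auto
  show "(\<lambda>y. y$a * y$b * y$c) \<in> borel_measurable M"
    by (rule meas_M[OF s]) measurable
  show "AE x in M. norm (x$a * x$b * x$c) \<le> norm ((x$a)^4 + (x$b)^4 + (x$c)^4 + 1)"
    using bound4[of _ _ _ 1] by (auto intro!: AE_I2 simp: abs_of_nonneg order_trans[OF bound4])
qed

lemma mono2:
  fixes M :: "(real^'n) measure"
  assumes ps: "prob_space M" and s: "sets M = sets borel" and fm: "fourth_moments M"
  shows "integrable M (\<lambda>y. y$a * y$b)"
proof (rule Bochner_Integration.integrable_bound)
  interpret prob_space M by fact
  show "integrable M (\<lambda>y. (y$a)^4 + (y$b)^4 + 1 + 1)"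
    using fm unfolding fourth_moments_def by auto
  show "(\<lambda>y. y$a * y$b) \<in> borel_measurable M"
    by (rule meas_M[OF s]) measurable
  show "AE x in M. norm (x$a * x$b) \<le> norm ((x$a)^4 + (x$b)^4 + 1 + 1)"
    using bound4[of _ _ 1 1] by (auto intro!: AE_I2 simp: abs_of_nonneg order_trans[OF bound4])
qed

lemma mono1:
  fixes M :: "(real^'n) measure"
  assumes ps: "prob_space M" and s: "sets M = sets borel" and fm: "fourth_moments M"
  shows "integrable M (\<lambda>y. y$a)"
proof (rule Bochner_Integration.integrable_bound)
  interpret prob_space M by fact
  show "integrable M (\<lambda>y. (y$a)^4 + 1 + 1 + 1)"
    using fm unfolding fourth_moments_def by auto
  show "(\<lambda>y. y$a) \<in> borel_measurable M"
    by (rule meas_M[OF s]) measurable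
  show "AE x in M. norm (x$a) \<le> norm ((x$a)^4 + 1 + 1 + 1)"
    using bound4[of _ 1 1 1] by (auto intro!: AE_I2 simp: abs_of_nonneg order_trans[OF bound4])
qed

lemma indep3:
  fixes M :: "(real^'n) measure"
  assumes ps: "prob_space M" and s: "sets M = sets borel" and fm: "fourth_moments M"
    and mean0: "\<And>i. expect M (\<lambda>y. y$i) = 0"
    and ind: "prob_space.indep_vars M (\<lambda>_. borel) (\<lambda>j y. y $ j) UNIV"
  shows "expect M (\<lambda>y. y$j * y$l * y$m) = (if j = l \<and> l = m then expect M (\<lambda>y. (y$j)^3) else 0)"
proof -
  interpret prob_space M by fact
  have i1: "\<And>a. integrable M (\<lambda>y. y$a)" using mono1[OF ps s fm] .
  have i2: "\<And>a. integrable M (\<lambda>y. (y$a)^2)" using mono2[OF ps s fm] by (simp add: power2_eq_square)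
  have pair: "expect M (\<lambda>y. (y$a)^2 * y$b) = 0" if ab: "a \<noteq> b" for a b
  proof -
    define Y where "Y i = (if i = a then (\<lambda>x::real. x^2) else (\<lambda>x. x))" for i
    have "indep_vars (\<lambda>_. borel) (\<lambda>i y. Y i (y$i)) UNIV"
      by (rule indep_vars_compose2[OF ind]) (auto simp: Y_def)
    then have ind2: "indep_vars (\<lambda>_. borel) (\<lambda>i y. Y i (y$i)) {a,b}"
      by (rule indep_vars_subset) auto
    have "(\<integral>y. (\<Prod>i\<in>{a,b}. Y i (y$i)) \<partial>M) = (\<Prod>i\<in>{a,b}. \<integral>y. Y i (y$i) \<partial>M)"
      by (rule indep_vars_lebesgue_integral[OF _ ind2]) (auto simp: Y_def i1 i2)
    then show ?thesis using ab mean0[of b] by (simp add: Y_def expect_def)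
  qed
  show ?thesis
  proof (cases "j = l \<and> l = m")
    case True then show ?thesis by (simp add: power3_eq_cube mult.assoc)
  next
    case False
    then consider "j = l" "l \<noteq> m" | "j = m" "l \<noteq> m" | "l = m" "j \<noteq> l" | "j \<noteq> l" "l \<noteq> m" "j \<noteq> m"
      by blast
    then show ?thesis
    proof cases
      case 1 then show ?thesis using pair[of j m] False by (simp add: power2_eq_square)
    next
      case 2 then show ?thesis using pair[of j l] False by (simp add: power2_eq_square mult_ac)
    next
      case 3 then show ?thesis using pair[of l j] False by (simp add: power2_eq_square mult_ac)
    next
      case 4
      have ind3: "indep_vars (\<lambda>_. borel) (\<lambda>i y. y$i) {j,l,m}"
        by (rule indep_vars_subset[OF ind]) auto
      have "(\<integral>y. (\<Prod>i\<in>{j,l,m}. y$i) \<partial>M) = (\<Prod>i\<in>{j,l,m}. \<integral>y. y$i \<partial>M)"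
        by (rule indep_vars_lebesgue_integral[OF _ ind3]) (auto simp: i1)
      then show ?thesis using 4 mean0[of j] False by (simp add: expect_def mult_ac)
    qed
  qed
qed

lemma quad_comp: "quadvec H y $ i = (\<Sum>l\<in>UNIV. \<Sum>m\<in>UNIV. H i $ l $ m * (y$l * y$m))"
  by (simp add: quadvec_def inner_vec_def matrix_vector_mult_def sum_distrib_left mult_ac)

lemma inner_quad: "c \<bullet> quadvec H y = (\<Sum>l\<in>UNIV. \<Sum>m\<in>UNIV. (\<Sum>i\<in>UNIV. c$i * H i$l$m) * (y$l * y$m))"
proof -
  have "c \<bullet> quadvec H y = (\<Sum>i\<in>UNIV. \<Sum>l\<in>UNIV. \<Sum>m\<in>UNIV. c$i * H i $ l $ m * (y$l * y$m))"
    by (simp add: inner_vec_def quad_comp sum_distrib_left mult_ac)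
  also have "\<dots> = (\<Sum>l\<in>UNIV. \<Sum>i\<in>UNIV. \<Sum>m\<in>UNIV. c$i * H i $ l $ m * (y$l * y$m))"
    by (rule sum.swap)
  also have "\<dots> = (\<Sum>l\<in>UNIV. \<Sum>m\<in>UNIV. \<Sum>i\<in>UNIV. c$i * H i $ l $ m * (y$l * y$m))"
    by (rule sum.cong[OF refl], rule sum.swap)
  also have "\<dots> = (\<Sum>l\<in>UNIV. \<Sum>m\<in>UNIV. (\<Sum>i\<in>UNIV. c$i * H i$l$m) * (y$l * y$m))"
    by (simp add: sum_distrib_right)
  finally show ?thesis .
qed

lemma inner_ols:
  fixes X :: "real^'k^'n"
  assumes "rank X = CARD('k)"
  shows "c \<bullet> ols X y = (\<Sum>j\<in>UNIV. (X *v (matrix_inv (transpose X ** X) *v c))$j * y$j)"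
proof -
  let ?Si = "matrix_inv (transpose X ** X)"
  have "c \<bullet> ols X y = c \<bullet> ((?Si ** transpose X) *v y)"
    unfolding ols_def matrix_vector_mul_assoc ..

  also have "\<dots> = (transpose (?Si ** transpose X) *v c) \<bullet> y"
    by (rule inner_matrix_transpose)
  also have "transpose (?Si ** transpose X) = X ** ?Si"
    using XtX_inv(3)[OF assms] by (simp add: matrix_transpose_mul)
  finally show ?thesis by (simp add: inner_vec_def matrix_vector_mul_assoc mult_ac)
qed

lemma exp_ff:
  fixes w y :: "real^'n" and K :: "'n \<Rightarrow> 'n \<Rightarrow> real"
  shows "(\<Sum>j\<in>UNIV. w$j * y$j) * (\<Sum>j\<in>UNIV. w$j * y$j) =
   (\<Sum>j\<in>UNIV. \<Sum>l\<in>UNIV. (w$j * w$l) * (y$j * y$l))"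
  unfolding sum_product by (intro sum.cong refl) (simp add: mult_ac)

lemma exp_fg:
  fixes w y :: "real^'n" and K :: "'n \<Rightarrow> 'n \<Rightarrow> real"
  shows "(\<Sum>j\<in>UNIV. w$j * y$j) * (\<Sum>l\<in>UNIV. \<Sum>m\<in>UNIV. K l m * (y$l * y$m)) =
   (\<Sum>j\<in>UNIV. \<Sum>l\<in>UNIV. \<Sum>m\<in>UNIV. (w$j * K l m) * (y$j * y$l * y$m))"
  apply (simp only: sum_distrib_right)
  apply (simp only: sum_distrib_left)
  by (intro sum.cong refl) (simp add: mult_ac)

lemma exp_gg:
  fixes w y :: "real^'n" and K :: "'n \<Rightarrow> 'n \<Rightarrow> real"
  shows "(\<Sum>l\<in>UNIV. \<Sum>m\<in>UNIV. K l m * (y$l * y$m)) * (\<Sum>l\<in>UNIV. \<Sum>m\<in>UNIV. K l m * (y$l * y$m)) =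
   (\<Sum>l\<in>UNIV. \<Sum>m\<in>UNIV. \<Sum>p\<in>UNIV. \<Sum>q\<in>UNIV. (K l m * K p q) * (y$l * y$m * y$p * y$q))"
  apply (simp only: sum_distrib_right)
  apply (simp only: sum_distrib_left)
  by (intro sum.cong refl) (simp add: mult_ac)

lemma poly_int:
  fixes M :: "(real^'n) measure" and w :: "real^'n" and K :: "'n \<Rightarrow> 'n \<Rightarrow> real"
  assumes ps: "prob_space M" and s: "sets M = sets borel" and fm: "fourth_moments M"
  shows "integrable M (\<lambda>y. (\<Sum>j\<in>UNIV. w$j * y$j))"
   "integrable M (\<lambda>y. (\<Sum>l\<in>UNIV. \<Sum>m\<in>UNIV. K l m * (y$l * y$m)))"
   "integrable M (\<lambda>y. (\<Sum>j\<in>UNIV. w$j * y$j) * (\<Sum>j\<in>UNIV. w$j * y$j))"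
   "integrable M (\<lambda>y. (\<Sum>j\<in>UNIV. w$j * y$j) * (\<Sum>l\<in>UNIV. \<Sum>m\<in>UNIV. K l m * (y$l * y$m)))"
   "integrable M (\<lambda>y. (\<Sum>l\<in>UNIV. \<Sum>m\<in>UNIV. K l m * (y$l * y$m)) * (\<Sum>l\<in>UNIV. \<Sum>m\<in>UNIV. K l m * (y$l * y$m)))"
  unfolding exp_ff exp_fg exp_gg
  using mono1[OF ps s fm] mono2[OF ps s fm] mono3[OF ps s fm] mono4[OF ps s fm]
  by (auto intro!: integrable_sum integrable_mult_right)

lemma partA:
  fixes X :: "real^'k^'n" and H :: "'k \<Rightarrow> real^'n^'n"
  assumes rankX: "rank X = CARD('k)"
    and Hsym: "\<And>i. transpose (H i) = H i"
    and Htr: "\<And>i. trace (H i) = 0"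
    and HX: "\<And>i. transpose X ** H i ** X = 0"
    and F: "in_F20 X M b"
  shows "integrable M (est_alpha X H \<alpha>) \<and> (\<integral>y. est_alpha X H \<alpha> y \<partial>M) = b"
proof -
  define Si where "Si = matrix_inv (transpose X ** X)"
  define A where "A = Si ** transpose X"
  have SiS: "Si ** (transpose X ** X) = mat 1" using XtX_inv(1)[OF rankX] by (simp add: Si_def)
  have olsA: "\<And>y. ols X y = A *v y"
    unfolding ols_def A_def Si_def matrix_vector_mul_assoc ..
  have AX: "A ** X = mat 1" using SiS by (simp add: A_def matrix_mul_assoc)
  define v where "v = X *v b"
  from F obtain \<sigma>2 where ps: "prob_space M" and s: "sets M = sets borel"
    and e1: "\<And>i. integrable M (\<lambda>y. (y - v)$i)" "\<And>i. expect M (\<lambda>y. (y - v)$i) = 0"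
    and e2: "\<And>i j. integrable M (\<lambda>y. (y - v)$i * (y - v)$j)"
      "\<And>i j. expect M (\<lambda>y. (y - v)$i * (y - v)$j) = (if i = j then \<sigma>2 else 0)"
    unfolding in_F20_def v_def by blast
  interpret prob_space M by fact
  have y1eq: "\<And>i. (\<lambda>y. y$i) = (\<lambda>y. v$i + (y - v)$i)" by auto
  have i1: "integrable M (\<lambda>y. y$i)" for i
    by (subst y1eq) (intro Bochner_Integration.integrable_add integrable_const e1)
  have E1: "(\<integral>y. y$i \<partial>M) = v$i" for i
  proof -
    have "expect M (\<lambda>y. (y - v)$i) = (\<integral>y. y$i \<partial>M) - v$i"
      using i1[of i] by (simp add: expect_def prob_space)
    then show ?thesis using e1(2)[of i] by simp
  qed
  have y2eq: "\<And>l m. (\<lambda>y. y$l * y$m) =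
     (\<lambda>y. v$l * v$m + v$l * (y-v)$m + v$m * (y-v)$l + (y-v)$l * (y-v)$m)"
    by (auto simp: algebra_simps)
  have i2: "integrable M (\<lambda>y. y$l * y$m)" for l m
    by (subst y2eq) (intro Bochner_Integration.integrable_add integrable_mult_right integrable_const e1 e2)
  have E2: "(\<integral>y. y$l * y$m \<partial>M) = v$l * v$m + (if l = m then \<sigma>2 else 0)" for l m
  proof -
    have eq: "(\<lambda>y. (y - v)$l * (y - v)$m) = (\<lambda>y. y$l*y$m - v$l * y$m - v$m * y$l + v$l * v$m)"
      by (auto simp: algebra_simps)
    have "expect M (\<lambda>y. (y - v)$l * (y - v)$m) = (\<integral>y. y$l * y$m \<partial>M) - v$l * v$m"
      unfolding eq expect_def using i1 i2 by (simp add: E1 prob_space)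
    then show ?thesis using e2(2)[of l m] by simp
  qed
  define comp where "comp i y = (\<Sum>j\<in>UNIV. A$i$j * y$j) + \<alpha> * (\<Sum>l\<in>UNIV. \<Sum>m\<in>UNIV. H i$l$m * (y$l*y$m))" for i y
  have compeq: "\<And>y i. est_alpha X H \<alpha> y $ i = comp i y"
    by (simp add: est_alpha_def olsA quad_comp matrix_vector_mult_def comp_def)
  have ci: "\<And>i. integrable M (comp i)" unfolding comp_def using i1 i2 by auto
  have Av: "A *v v = b" by (simp add: v_def matrix_vector_mul_assoc AX)
  have vHv: "\<And>i. v \<bullet> (H i *v v) = 0"
  proof -
    fix i
    have "v \<bullet> (H i *v v) = b \<bullet> (transpose X *v (H i *v (X *v b)))"
      using inner_matrix_transpose[of b "transpose X" "H i *v (X *v b)"] by (simp add: v_def)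
    also have "\<dots> = b \<bullet> ((transpose X ** H i ** X) *v b)"
      by (simp add: matrix_vector_mul_assoc matrix_mul_assoc)
    finally show "v \<bullet> (H i *v v) = 0" by (simp add: HX)
  qed
  have cE: "(\<integral>y. comp i y \<partial>M) = b$i" for i
  proof -
    have "(\<integral>y. comp i y \<partial>M) = (\<Sum>j\<in>UNIV. A$i$j * v$j) + \<alpha> * (\<Sum>l\<in>UNIV. \<Sum>m\<in>UNIV. H i$l$m * (v$l * v$m + (if l = m then \<sigma>2 else 0)))"
      unfolding comp_def using i1 i2 by (simp add: E1 E2)
    also have "(\<Sum>j\<in>UNIV. A$i$j * v$j) = b$i"
      using Av by (simp add: matrix_vector_mult_def vec_eq_iff)
    also have "(\<Sum>l\<in>UNIV. \<Sum>m\<in>UNIV. H i$l$m * (v$l * v$m + (if l = m then \<sigma>2 else 0)))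
        = v \<bullet> (H i *v v) + \<sigma>2 * trace (H i)"
    proof -
      have d: "(\<Sum>m\<in>UNIV. H i$l$m * (if l = m then \<sigma>2 else 0)) = \<sigma>2 * H i$l$l" for l
      proof -
        have "(\<Sum>m\<in>UNIV. H i$l$m * (if l = m then \<sigma>2 else 0)) = (\<Sum>m\<in>UNIV. if l = m then \<sigma>2 * H i$l$l else 0)"
          by (rule sum.cong) auto
        then show ?thesis by simp
      qed
      have "(\<Sum>l\<in>UNIV. \<Sum>m\<in>UNIV. H i$l$m * (v$l * v$m + (if l = m then \<sigma>2 else 0)))
         = (\<Sum>l\<in>UNIV. \<Sum>m\<in>UNIV. H i$l$m * (v$l * v$m)) + (\<Sum>l\<in>UNIV. \<Sum>m\<in>UNIV. H i$l$m * (if l = m then \<sigma>2 else 0))"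
        by (simp only: distrib_left sum.distrib)
      also have "(\<Sum>l\<in>UNIV. \<Sum>m\<in>UNIV. H i$l$m * (v$l * v$m)) = v \<bullet> (H i *v v)"
        by (simp add: inner_vec_def matrix_vector_mult_def sum_distrib_left mult_ac)
      also have "(\<Sum>l\<in>UNIV. \<Sum>m\<in>UNIV. H i$l$m * (if l = m then \<sigma>2 else 0)) = \<sigma>2 * trace (H i)"
        by (simp only: d trace_def sum_distrib_left)
      finally show ?thesis .
    qed
    finally show ?thesis by (simp add: vHv Htr)
  qed
  have bexp: "\<And>x::real^'k. (\<Sum>i\<in>UNIV. (x$i) *\<^sub>R axis i 1) = x"
    by (simp add: vec_eq_iff axis_def if_distrib cong: if_cong)
  have repr: "est_alpha X H \<alpha> = (\<lambda>y. \<Sum>i\<in>UNIV. comp i y *\<^sub>R axis i (1::real))"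
  proof (rule ext)
    fix y
    have "est_alpha X H \<alpha> y = (\<Sum>i\<in>UNIV. (est_alpha X H \<alpha> y $ i) *\<^sub>R axis i (1::real))"
      by (rule bexp[symmetric])
    also have "\<dots> = (\<Sum>i\<in>UNIV. comp i y *\<^sub>R axis i (1::real))"
      by (simp only: compeq)
    finally show "est_alpha X H \<alpha> y = (\<Sum>i\<in>UNIV. comp i y *\<^sub>R axis i (1::real))" .
  qed
  have int: "integrable M (est_alpha X H \<alpha>)"
    unfolding repr using ci by auto
  have "(\<integral>y. est_alpha X H \<alpha> y \<partial>M) $ i = b $ i" for i
  proof -
    have "(\<integral>y. est_alpha X H \<alpha> y \<partial>M) $ i = (\<integral>y. est_alpha X H \<alpha> y \<partial>M) \<bullet> axis i 1"
      by (rule cart_eq_inner_axis)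
    also have "\<dots> = (\<integral>y. est_alpha X H \<alpha> y \<bullet> axis i 1 \<partial>M)"
      using int by simp
    also have "\<dots> = (\<integral>y. comp i y \<partial>M)"
      by (simp add: cart_eq_inner_axis[symmetric] compeq)
    finally show ?thesis using cE by simp
  qed
  then show ?thesis using int by (simp add: vec_eq_iff)
qed

lemma quad_neg:
  fixes C V :: real
  assumes "C \<noteq> 0" "0 \<le> V"
  shows "2*(-C/(V+1))*C + (-C/(V+1))^2 * V < 0"
proof -
  define u where "u = -C/(V+1)"
  have pos: "0 < V + 1" using assms by simp
  have hC: "C = -u*(V+1)" using pos by (simp add: u_def)
  have u0: "u \<noteq> 0" using assms(1) hC by auto
  have "2*u*C + u^2 * V = -(u^2*(V+2))" unfolding hC by (simp add: power2_eq_square algebra_simps)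
  also have "\<dots> < 0"
  proof -
    have "0 < u^2" using u0 by simp
    then have "0 < u^2 * (V+2)" using assms(2) by simp
    then show ?thesis by simp
  qed
  finally show ?thesis by (simp add: u_def)
qed

lemma partB:
  fixes X :: "real^'k^'n" and H :: "'k \<Rightarrow> real^'n^'n"
  assumes rankX: "rank X = CARD('k)"
    and F: "in_F20 X M b" and fm: "fourth_moments M"
    and C: "cov M (\<lambda>y. c \<bullet> ols X y) (\<lambda>y. c \<bullet> quadvec H y) \<noteq> 0"
  shows "\<exists>\<alpha>. var M (\<lambda>y. c \<bullet> est_alpha X H \<alpha> y) < var M (\<lambda>y. c \<bullet> ols X y)"
proof -
  from F have ps: "prob_space M" and s: "sets M = sets borel" unfolding in_F20_def by blast+
  define d where "d = X *v (matrix_inv (transpose X ** X) *v c)"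
  define K where "K l m = (\<Sum>i\<in>UNIV. c$i * H i$l$m)" for l m
  have feq: "(\<lambda>y. c \<bullet> ols X y) = (\<lambda>y. \<Sum>j\<in>UNIV. d$j * y$j)"
    using inner_ols[OF rankX] by (simp add: d_def)
  have geq: "(\<lambda>y. c \<bullet> quadvec H y) = (\<lambda>y. \<Sum>l\<in>UNIV. \<Sum>m\<in>UNIV. K l m * (y$l * y$m))"
    by (simp add: inner_quad K_def)
  have eeq: "(\<lambda>y. c \<bullet> est_alpha X H \<alpha> y) = (\<lambda>y. c \<bullet> ols X y + \<alpha> * (c \<bullet> quadvec H y))" for \<alpha>
    by (simp add: est_alpha_def inner_add_right)
  note P = poly_int(1)[OF ps s fm, of d] poly_int(2)[OF ps s fm, of K] poly_int(3)[OF ps s fm, of d]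
    poly_int(4)[OF ps s fm, of d K] poly_int(5)[OF ps s fm, of K]
  define Cv where "Cv = cov M (\<lambda>y. c \<bullet> ols X y) (\<lambda>y. c \<bullet> quadvec H y)"
  define Vg where "Vg = var M (\<lambda>y. c \<bullet> quadvec H y)"
  have V: "var M (\<lambda>y. c \<bullet> est_alpha X H \<alpha> y) = var M (\<lambda>y. c \<bullet> ols X y) + 2*\<alpha>*Cv + \<alpha>^2 * Vg" for \<alpha>
  proof -
    have feq': "c \<bullet> ols X y = (\<Sum>j\<in>UNIV. d$j * y$j)" for y using feq by metis
    have geq': "c \<bullet> quadvec H y = (\<Sum>l\<in>UNIV. \<Sum>m\<in>UNIV. K l m * (y$l * y$m))" for y using geq by metis
    show ?thesis unfolding eeq Cv_def Vg_def
      by (rule var_lin[OF ps]; simp only: feq' geq' P)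
  qed
  have Vg0: "0 \<le> Vg" unfolding Vg_def var_def expect_def by (rule integral_nonneg_AE) simp
  have "2*(-Cv/(Vg+1))*Cv + (-Cv/(Vg+1))^2 * Vg < 0"
    by (rule quad_neg) (use C Vg0 Cv_def in auto)
  then show ?thesis by (intro exI[of _ "-Cv/(Vg+1)"]) (simp add: V)
qed

lemma covC:
  fixes X :: "real^'k^'n" and H :: "'k \<Rightarrow> real^'n^'n"
  assumes rankX: "rank X = CARD('k)"
    and F: "in_F20 X M 0" and fm: "fourth_moments M"
  shows "cov M (\<lambda>y. c \<bullet> ols X y) (\<lambda>y. c \<bullet> quadvec H y) =
         (\<Sum>j\<in>UNIV. \<Sum>l\<in>UNIV. \<Sum>m\<in>UNIV.
            (X *v (matrix_inv (transpose X ** X) *v c)) $ j * (\<Sum>i\<in>UNIV. c $ i * H i $ l $ m) * expect M (\<lambda>y. y $ j * y $ l * y $ m))"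
proof -
  from F have ps: "prob_space M" and s: "sets M = sets borel" unfolding in_F20_def by blast+
  have mean0: "expect M (\<lambda>y. y$i) = 0" for i using F unfolding in_F20_def by auto
  define d where "d = X *v (matrix_inv (transpose X ** X) *v c)"
  define K where "K l m = (\<Sum>i\<in>UNIV. c$i * H i$l$m)" for l m
  have feq: "(\<lambda>y. c \<bullet> ols X y) = (\<lambda>y. \<Sum>j\<in>UNIV. d$j * y$j)"
    using inner_ols[OF rankX] by (simp add: d_def)
  have geq: "(\<lambda>y. c \<bullet> quadvec H y) = (\<lambda>y. \<Sum>l\<in>UNIV. \<Sum>m\<in>UNIV. K l m * (y$l * y$m))"
    by (simp add: inner_quad K_def)
  note P = poly_int(1)[OF ps s fm, of d] poly_int(2)[OF ps s fm, of K] poly_int(3)[OF ps s fm, of d]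
    poly_int(4)[OF ps s fm, of d K] poly_int(5)[OF ps s fm, of K]
  note m1 = mono1[OF ps s fm] and m3 = mono3[OF ps s fm]
  have Ef: "(\<integral>y. (\<Sum>j\<in>UNIV. d$j * y$j) \<partial>M) = 0"
    using m1 mean0 by (simp add: expect_def)
  define Eg where "Eg = (\<integral>y. (\<Sum>l\<in>UNIV. \<Sum>m\<in>UNIV. K l m * (y$l * y$m)) \<partial>M)"
  have "cov M (\<lambda>y. c \<bullet> ols X y) (\<lambda>y. c \<bullet> quadvec H y) =
     (\<integral>y. (\<Sum>j\<in>UNIV. d$j * y$j) * (\<Sum>l\<in>UNIV. \<Sum>m\<in>UNIV. K l m * (y$l * y$m)) - Eg * (\<Sum>j\<in>UNIV. d$j * y$j) \<partial>M)"
    unfolding cov_def feq geq expect_def Ef Eg_def[symmetric] by (simp add: algebra_simps)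
  also have "\<dots> = (\<integral>y. (\<Sum>j\<in>UNIV. d$j * y$j) * (\<Sum>l\<in>UNIV. \<Sum>m\<in>UNIV. K l m * (y$l * y$m)) \<partial>M)"
    using P(1) P(4) Ef by simp
  also have "\<dots> = (\<integral>y. (\<Sum>j\<in>UNIV. \<Sum>l\<in>UNIV. \<Sum>m\<in>UNIV. (d$j * K l m) * (y$j * y$l * y$m)) \<partial>M)"
    by (simp only: exp_fg)
  also have "\<dots> = (\<Sum>j\<in>UNIV. \<Sum>l\<in>UNIV. \<Sum>m\<in>UNIV. d$j * K l m * expect M (\<lambda>y. y $ j * y $ l * y $ m))"
    using m3 by (simp add: expect_def)
  finally show ?thesis by (simp add: d_def K_def)
qed

lemma collapse:
  fixes d :: "'n::finite \<Rightarrow> real"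
  shows "(\<Sum>l\<in>UNIV. \<Sum>m\<in>UNIV. d j * K l m * (if j = l \<and> l = m then a else 0)) = d j * K j j * a"
proof -
  have eq: "d j * K l m * (if j = l \<and> l = m then a else 0) = (if l = j then (if m = j then d j * K j j * a else 0) else 0)" for l m
    by auto
  have eq2: "(\<Sum>m\<in>UNIV. if l = j then (if m = j then d j * K j j * a else 0) else 0) = (if l = j then d j * K j j * a else 0)" for l
    by (cases "l = j") simp_all
  show ?thesis by (simp only: eq eq2) simp
qed

theorem lemmaA1:
  fixes X :: "real^'k^'n" and H :: "'k \<Rightarrow> real^'n^'n"
  assumes kn: "CARD('k) < CARD('n)"
    and rankX: "rank X = CARD('k)"
    and Hsym: "\<And>i. transpose (H i) = H i"
    and Htr: "\<And>i. trace (H i) = 0"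
    and HX: "\<And>i. transpose X ** H i ** X = 0"
  shows
   "(\<forall>M b \<alpha>. in_F20 X M b \<longrightarrow>
        integrable M (est_alpha X H \<alpha>) \<and> (\<integral>y. est_alpha X H \<alpha> y \<partial>M) = b)
  \<and> (\<forall>M b c. in_F20 X M b \<and> fourth_moments M \<and>
        cov M (\<lambda>y. c \<bullet> ols X y) (\<lambda>y. c \<bullet> quadvec H y) \<noteq> 0 \<longrightarrow>
        (\<exists>\<alpha>. var M (\<lambda>y. c \<bullet> est_alpha X H \<alpha> y) < var M (\<lambda>y. c \<bullet> ols X y)))
  \<and> (\<forall>M c. in_F20 X M 0 \<and> fourth_moments M \<longrightarrow>
        (let d = X *v (matrix_inv (transpose X ** X) *v c) in
         cov M (\<lambda>y. c \<bullet> ols X y) (\<lambda>y. c \<bullet> quadvec H y) =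
         (\<Sum>j\<in>UNIV. \<Sum>l\<in>UNIV. \<Sum>m\<in>UNIV.
            d $ j * (\<Sum>i\<in>UNIV. c $ i * H i $ l $ m) * expect M (\<lambda>y. y $ j * y $ l * y $ m))))
  \<and> (\<forall>M c. in_F20 X M 0 \<and> fourth_moments M \<and>
        prob_space.indep_vars M (\<lambda>_. borel) (\<lambda>j y. y $ j) UNIV \<longrightarrow>
        (let d = X *v (matrix_inv (transpose X ** X) *v c) in
         cov M (\<lambda>y. c \<bullet> ols X y) (\<lambda>y. c \<bullet> quadvec H y) =
         (\<Sum>j\<in>UNIV. d $ j * (\<Sum>i\<in>UNIV. c $ i * H i $ j $ j) * expect M (\<lambda>y. (y $ j) ^ 3))))"
proof -
  have A: "\<forall>M b \<alpha>. in_F20 X M b \<longrightarrow>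
        integrable M (est_alpha X H \<alpha>) \<and> (\<integral>y. est_alpha X H \<alpha> y \<partial>M) = b"
    using partA[where H=H, OF rankX Hsym Htr HX] by blast
  have B: "\<forall>M b c. in_F20 X M b \<and> fourth_moments M \<and>
        cov M (\<lambda>y. c \<bullet> ols X y) (\<lambda>y. c \<bullet> quadvec H y) \<noteq> 0 \<longrightarrow>
        (\<exists>\<alpha>. var M (\<lambda>y. c \<bullet> est_alpha X H \<alpha> y) < var M (\<lambda>y. c \<bullet> ols X y))"
    using partB[OF rankX] by blast
  have C: "\<forall>M c. in_F20 X M 0 \<and> fourth_moments M \<longrightarrow>
        (let d = X *v (matrix_inv (transpose X ** X) *v c) in
         cov M (\<lambda>y. c \<bullet> ols X y) (\<lambda>y. c \<bullet> quadvec H y) =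
         (\<Sum>j\<in>UNIV. \<Sum>l\<in>UNIV. \<Sum>m\<in>UNIV.
            d $ j * (\<Sum>i\<in>UNIV. c $ i * H i $ l $ m) * expect M (\<lambda>y. y $ j * y $ l * y $ m)))"
    unfolding Let_def using covC[OF rankX] by blast
  have D: "\<forall>M c. in_F20 X M 0 \<and> fourth_moments M \<and>
        prob_space.indep_vars M (\<lambda>_. borel) (\<lambda>j y. y $ j) UNIV \<longrightarrow>
        (let d = X *v (matrix_inv (transpose X ** X) *v c) in
         cov M (\<lambda>y. c \<bullet> ols X y) (\<lambda>y. c \<bullet> quadvec H y) =
         (\<Sum>j\<in>UNIV. d $ j * (\<Sum>i\<in>UNIV. c $ i * H i $ j $ j) * expect M (\<lambda>y. (y $ j) ^ 3)))"
  proof (intro allI impI)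
    fix M c
    assume h: "in_F20 X M 0 \<and> fourth_moments M \<and>
        prob_space.indep_vars M (\<lambda>_. borel) (\<lambda>j y. y $ j) UNIV"
    then have F: "in_F20 X M 0" and fm: "fourth_moments M"
      and ind: "prob_space.indep_vars M (\<lambda>_. borel) (\<lambda>j y. y $ j) UNIV" by auto
    from F have ps: "prob_space M" and s: "sets M = sets borel" unfolding in_F20_def by blast+
    have mean0: "expect M (\<lambda>y. y$i) = 0" for i using F unfolding in_F20_def by auto
    show "let d = X *v (matrix_inv (transpose X ** X) *v c) in
         cov M (\<lambda>y. c \<bullet> ols X y) (\<lambda>y. c \<bullet> quadvec H y) =
         (\<Sum>j\<in>UNIV. d $ j * (\<Sum>i\<in>UNIV. c $ i * H i $ j $ j) * expect M (\<lambda>y. (y $ j) ^ 3))"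
      unfolding Let_def covC[OF rankX F fm] indep3[OF ps s fm mean0 ind]
      by (rule sum.cong[OF refl], rule collapse)
  qed
  show ?thesis using A B C D by blast
qed

end
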